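(* Let $d,\tilde d\in\mathbb{R}^m$ with $d,\tilde d>0$ and $\ell,\tilde\ell\in\mathbb{R}^m$ with $f(d,\ell)>0$ and $f(\tilde d,\tilde\ell)>0$. Let $j\in\{1,\dots,m\}$ and suppose $$\frac{1}{f(\tilde d,\tilde\ell)}\tilde d=\alpha\Big(\frac{1}{f(d,\ell)}d+\frac{2}{m-1}\frac{1}{\gamma_j(d,\ell)^2}e_j\Big)$$ for some scalar $\alpha\ge\frac{m^2-1}{m^2}$. If $\big(d_j/f(d,\ell)\big)^{-1/2}\ge\tau(A,u)$, then $\phi(\tilde d,\tilde\ell)\le e^{-\frac{1}{2(m+1)}}\phi(d,\ell)$.
   Context: Standing assumption: $A=[a_1|\cdots|a_m]\in\mathbb{R}^{n\times m}$ has columns of unit Euclidean norm and $\{A\lambda:\lambda\ge0\}=\mathbb{R}^n$ (so $m\ge2$); $u\in\mathbb{R}^m$. $D=\mathrm{diag}(d)$; $r(\ell)=\tfrac12(u+\ell)$, $v(\ell)=\tfrac12(u-\ell)$, $B(d)=ADA^\top$, $y(d,\ell)=B(d)^{-1}ADr(\ell)$, $t(d,\ell)=A^\top y(d,\ell)-r(\ell)$, $f(d,\ell)=v(\ell)^\top Dv(\ell)-t(d,\ell)^\top Dt(d,\ell)$, $\gamma_i(d,\ell)=\sqrt{f(d,\ell)a_i^\top B(d)^{-1}a_i}$. $\tau(A,u):=|z^*|$ with $z^*:=\max_x\min_i(u_i-a_i^\top x)$. Potential: $\phi(d,\ell):=\prod_{i=1}^m\max\Big\{\big(\tfrac{d_i}{f(d,\ell)}\big)^{-1/2},\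 \tfrac{m}{m+1}\tau(A,u)\Big\}$. *)

theory Defs
  imports "HOL-Analysis.Analysis"
begin

text \<open>A :: real^'m^'n is the n x m matrix whose columns a_i = column i A.
  Vectors d, l, u :: real^'m; m = CARD('m).\<close>

definition diagv :: "real^'m \<Rightarrow> real^'m^'m" where
  "diagv d = (\<chi> i j. if i = j then d $ i else 0)"

definition rvec :: "real^'m \<Rightarrow> real^'m \<Rightarrow> real^'m" where
  "rvec u l = (1/2) *\<^sub>R (u + l)"

definition vvec :: "real^'m \<Rightarrow> real^'m \<Rightarrow> real^'m" where
  "vvec u l = (1/2) *\<^sub>R (u - l)"

definition Bmat :: "real^'m^'n \<Rightarrow> real^'m \<Rightarrow> real^'n^'n" where
  "Bmat A d = A ** diagv d ** transpose A"

definition yvec :: "real^'m^'n \<Rightarrow> real^'m \<Rightarrow> real^'m \<Rightarrow> real^'m \<Rightarrow> real^'n" where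
  "yvec A u d l = matrix_inv (Bmat A d) *v (A *v (diagv d *v rvec u l))"

definition tvec :: "real^'m^'n \<Rightarrow> real^'m \<Rightarrow> real^'m \<Rightarrow> real^'m \<Rightarrow> real^'m" where
  "tvec A u d l = transpose A *v yvec A u d l - rvec u l"

definition ffun :: "real^'m^'n \<Rightarrow> real^'m \<Rightarrow> real^'m \<Rightarrow> real^'m \<Rightarrow> real" where
  "ffun A u d l = vvec u l \<bullet> (diagv d *v vvec u l) - tvec A u d l \<bullet> (diagv d *v tvec A u d l)"

definition gammaf :: "real^'m^'n \<Rightarrow> real^'m \<Rightarrow> real^'m \<Rightarrow> real^'m \<Rightarrow> 'm \<Rightarrow> real" where
  "gammaf A u d l i = sqrt (ffun A u d l * (column i A \<bullet> (matrix_inv (Bmat A d) *v column i A)))"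

text \<open>z* = max_x min_i (u_i - a_i . x); written as a supremum (it is attained under the
  standing assumptions).\<close>
definition zstar :: "real^'m^'n \<Rightarrow> real^'m \<Rightarrow> real" where
  "zstar A u = (SUP x. Min (range (\<lambda>i. u $ i - column i A \<bullet> x)))"

definition tau :: "real^'m^'n \<Rightarrow> real^'m \<Rightarrow> real" where
  "tau A u = \<bar>zstar A u\<bar>"

definition phi :: "real^'m^'n \<Rightarrow> real^'m \<Rightarrow> real^'m \<Rightarrow> real^'m \<Rightarrow> real" where
  "phi A u d l = (\<Prod>i\<in>UNIV.
     max ((d $ i / ffun A u d l) powr (-1/2))
         (real CARD('m) / (real CARD('m) + 1) * tau A u))"

end

theory Submission
  imports Defs
begin


lemma vA_comp: "(w v* A) $ i = column i A \<bullet> (w::real^'n)"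
  by (simp add: column_def vector_matrix_mult_def inner_vec_def mult.commute)

lemma tA_comp: "(transpose A *v w) $ i = column i A \<bullet> (w::real^'n)"
  by (simp add: transpose_matrix_vector vA_comp)

lemma diagv_comp: "(diagv d *v v) $ i = d $ i * v $ i"
proof -
  have "(\<Sum>j\<in>UNIV. (if i = j then d $ i else 0) * v $ j) = (\<Sum>j\<in>UNIV. if i = j then d $ i * v $ j else 0)"
    by (rule sum.cong) auto
  then show ?thesis by (simp add: diagv_def matrix_vector_mult_def)
qed

lemma quad_form:
  fixes A :: "real^'m^'n"
  shows "w \<bullet> (Bmat A d *v w) = (\<Sum>i\<in>UNIV. d $ i * (column i A \<bullet> w)\<^sup>2)"
proof -
  have "Bmat A d *v w = A *v (diagv d *v (transpose A *v w))"
    unfolding Bmat_def by (metis matrix_vector_mul_assoc)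
  then have "w \<bullet> (Bmat A d *v w) = (transpose A *v w) \<bullet> (diagv d *v (transpose A *v w))"
    by (metis dot_lmul_matrix transpose_matrix_vector)
  also have "\<dots> = (\<Sum>i\<in>UNIV. (transpose A *v w)$i * (d$i * (transpose A *v w)$i))"
    by (simp only: inner_vec_def diagv_comp inner_real_def)
  also have "\<dots> = (\<Sum>i\<in>UNIV. d $ i * (column i A \<bullet> w)\<^sup>2)"
    by (simp only: tA_comp power2_eq_square ac_simps)
  finally show ?thesis .
qed

lemma ker_trivial:
  fixes A :: "real^'m^'n"
  assumes pos_span: "{A *v c | c. \<forall>i. 0 \<le> c $ i} = UNIV"
    and "\<forall>i. column i A \<bullet> w = 0"
  shows "w = 0"
proof -
  have "w \<in> {A *v c | c. \<forall>i. 0 \<le> c $ i}" using pos_span by simp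
  then obtain c where c: "w = A *v c" by blast
  have "transpose A *v w = 0" using assms(2) by (simp add: vec_eq_iff tA_comp vA_comp)
  then have "w \<bullet> w = 0"
    by (metis c dot_lmul_matrix transpose_matrix_vector inner_zero_left)
  then show ?thesis by simp
qed

lemma quad_pos:
  fixes A :: "real^'m^'n"
  assumes pos_span: "{A *v c | c. \<forall>i. 0 \<le> c $ i} = UNIV"
    and d_pos: "\<forall>i. 0 < d $ i" and "w \<noteq> 0"
  shows "w \<bullet> (Bmat A d *v w) > 0"
proof -
  have nn: "\<forall>i\<in>UNIV. 0 \<le> d $ i * (column i A \<bullet> w)\<^sup>2" using d_pos by (simp add: less_imp_le)
  have "\<exists>i. column i A \<bullet> w \<noteq> 0" using ker_trivial[OF pos_span] assms(3) by blast
  then obtain i where i: "column i A \<bullet> w \<noteq> 0" by blast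
  have "0 < d $ i * (column i A \<bullet> w)\<^sup>2" using i d_pos by simp
  also have "\<dots> \<le> (\<Sum>i\<in>UNIV. d $ i * (column i A \<bullet> w)\<^sup>2)"
    by (rule member_le_sum) (use nn in auto)
  finally show ?thesis by (simp add: quad_form)
qed

lemma B_inv:
  fixes A :: "real^'m^'n"
  assumes pos_span: "{A *v c | c. \<forall>i. 0 \<le> c $ i} = UNIV"
    and d_pos: "\<forall>i. 0 < d $ i"
  shows "Bmat A d *v (matrix_inv (Bmat A d) *v a) = a"
proof -
  have "\<forall>x. Bmat A d *v x = 0 \<longrightarrow> x = 0"
    using quad_pos[OF pos_span d_pos] by (metis inner_zero_right less_irrefl)
  then have "invertible (Bmat A d)"
    using matrix_left_invertible_ker invertible_left_inverse by blast
  then have "Bmat A d ** matrix_inv (Bmat A d) = mat 1"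
    unfolding matrix_inv_def invertible_def by (rule someI_ex[THEN conjunct1])
  then show ?thesis by (metis matrix_vector_mul_assoc matrix_vector_mul_lid)
qed

lemma leverage:
  fixes A :: "real^'m^'n"
  assumes pos_span: "{A *v c | c. \<forall>i. 0 \<le> c $ i} = UNIV"
    and d_pos: "\<forall>i. 0 < d $ i" and nz: "column j A \<noteq> 0"
  defines "q \<equiv> column j A \<bullet> (matrix_inv (Bmat A d) *v column j A)"
  shows "0 < q \<and> d $ j * q \<le> 1"
proof -
  define a where "a = column j A"
  define w where "w = matrix_inv (Bmat A d) *v a"
  have Bw: "Bmat A d *v w = a" unfolding w_def by (rule B_inv[OF pos_span d_pos])
  have wnz: "w \<noteq> 0" using Bw nz a_def by auto
  have qq: "q = w \<bullet> (Bmat A d *v w)" unfolding q_def a_def[symmetric] w_def[symmetric] Bw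
    by (simp add: inner_commute)
  have qpos: "0 < q" using qq quad_pos[OF pos_span d_pos wnz] by simp
  have qa: "column j A \<bullet> w = q" unfolding q_def w_def a_def by simp
  have nn: "\<forall>i\<in>UNIV. 0 \<le> d $ i * (column i A \<bullet> w)\<^sup>2" using d_pos by (simp add: less_imp_le)
  have "d $ j * q\<^sup>2 \<le> (\<Sum>i\<in>UNIV. d $ i * (column i A \<bullet> w)\<^sup>2)"
    unfolding qa[symmetric] by (rule member_le_sum) (use nn in auto)
  also have "\<dots> = q" by (simp add: qq quad_form)
  finally have "d $ j * q * q \<le> 1 * q" by (simp add: power2_eq_square algebra_simps)
  then have "d $ j * q \<le> 1" using qpos by (simp add: mult_le_cancel_right)
  with qpos show ?thesis by simp
qed

lemma sqrt_exp: "sqrt (exp x) = exp (x/2)"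
proof -
  have "exp (x/2) ^ 2 = exp x" by (simp add: power2_eq_square flip: exp_add)
  then show ?thesis by (metis real_sqrt_unique exp_ge_zero)
qed

lemma scalar_bound:
  fixes N :: nat assumes N2: "N \<ge> 2"
  defines "m \<equiv> real N"
  shows "sqrt (m\<^sup>2 / (m\<^sup>2 - 1)) ^ (N - 1) * (m / (m + 1)) \<le> exp (- 1 / (2 * (m + 1)))"
proof -
  have m2: "m \<ge> 2" using N2 m_def by simp
  have "m * m \<ge> 2 * 2" by (rule mult_mono) (use m2 in auto)
  then have mm: "m\<^sup>2 - 1 > 0" by (simp add: power2_eq_square)
  have "m\<^sup>2 / (m\<^sup>2 - 1) = 1 + 1 / (m\<^sup>2 - 1)" using mm by (simp add: field_simps)
  also have "\<dots> \<le> exp (1 / (m\<^sup>2 - 1))" by (rule exp_ge_add_one_self[simplified add.commute])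
  finally have "sqrt (m\<^sup>2 / (m\<^sup>2 - 1)) \<le> exp (1 / (2 * (m\<^sup>2 - 1)))"
    using sqrt_exp real_sqrt_le_iff by (metis divide_divide_eq_left mult.commute)
  then have "sqrt (m\<^sup>2 / (m\<^sup>2 - 1)) ^ (N - 1) \<le> exp (1 / (2 * (m\<^sup>2 - 1))) ^ (N - 1)"
    by (rule power_mono) (use mm in simp)
  also have "\<dots> = exp (real (N - 1) * (1 / (2 * (m\<^sup>2 - 1))))"
    by (rule exp_of_nat_mult[symmetric])
  also have "real (N - 1) * (1 / (2 * (m\<^sup>2 - 1))) = 1 / (2 * (m + 1))"
    using m2 N2 mm by (simp add: m_def of_nat_diff field_simps power2_eq_square)
  finally have e1: "sqrt (m\<^sup>2 / (m\<^sup>2 - 1)) ^ (N - 1) \<le> exp (1 / (2 * (m + 1)))" .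
  have "m / (m + 1) = 1 + (- 1 / (m + 1))" using m2 by (simp add: field_simps)
  also have "\<dots> \<le> exp (- 1 / (m + 1))" by (rule exp_ge_add_one_self[simplified add.commute])
  finally have e2: "m / (m + 1) \<le> exp (- 1 / (m + 1))" .
  have "sqrt (m\<^sup>2 / (m\<^sup>2 - 1)) ^ (N - 1) * (m / (m + 1)) \<le> exp (1 / (2 * (m + 1))) * exp (- 1 / (m + 1))"
    by (rule mult_mono[OF e1 e2]) (use m2 in auto)
  also have "\<dots> = exp (- 1 / (2 * (m + 1)))"
    using m2 by (simp add: flip: exp_add) (simp add: field_simps)
  finally show ?thesis .
qed

lemma powr_half: "(y::real) > 0 \<Longrightarrow> y powr (-1/2) = 1 / sqrt y"
  by (simp add: powr_minus_divide powr_half_sqrt)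

lemma powr_half': "(y::real) > 0 \<Longrightarrow> y powr (-(1/2)) = 1 / sqrt y"
  by (simp add: powr_minus_divide powr_half_sqrt)

lemma card_ge2:
  fixes A :: "real^'m^'n"
  assumes unit_cols: "\<forall>i. norm (column i A) = 1"
    and pos_span: "{A *v c | c. \<forall>i. 0 \<le> c $ i} = UNIV"
  shows "CARD('m) \<ge> 2"
proof (rule ccontr)
  assume "\<not> CARD('m) \<ge> 2"
  moreover have "CARD('m) > 0" by (simp add: card_gt_0_iff)
  ultimately have c1: "CARD('m) = 1" by linarith
  obtain j :: 'm where True by blast
  have U: "UNIV = {j}" using c1 by (metis card_1_singletonE singletonD UNIV_I subsetI subset_antisym empty_subsetI insert_subset)
  have "- column j A \<in> {A *v c | c. \<forall>i. 0 \<le> c $ i}" using pos_span by simp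
  then obtain c where c: "- column j A = A *v c" and cn: "0 \<le> c $ j" by blast
  have "A *v c = c $ j *s column j A" by (simp add: matrix_mult_sum U)
  with c have "column j A + c $ j *s column j A = 0" by (metis neg_eq_iff_add_eq_0)
  then have "(1 + c $ j) *s column j A = 0" by (simp add: vector_sadd_rdistrib)
  moreover have "1 + c $ j \<noteq> 0" using cn by simp
  ultimately have "column j A = 0" by (metis vector_mul_eq_0)
  then show False using unit_cols by (metis norm_zero zero_neq_one)
qed

theorem lemma9:
  fixes A :: "real^'m^'n" and u d d' l l' :: "real^'m" and j :: 'm and \<alpha> :: real
  assumes unit_cols: "\<forall>i. norm (column i A) = 1"
    and pos_span: "{A *v c | c. \<forall>i. 0 \<le> c $ i} = UNIV"
    and d_pos: "\<forall>i. 0 < d $ i"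
    and d'_pos: "\<forall>i. 0 < d' $ i"
    and f_pos: "0 < ffun A u d l"
    and f'_pos: "0 < ffun A u d' l'"
    and upd: "(1 / ffun A u d' l') *\<^sub>R d' =
       \<alpha> *\<^sub>R ((1 / ffun A u d l) *\<^sub>R d
          + (2 / (real CARD('m) - 1) * (1 / (gammaf A u d l j)\<^sup>2)) *\<^sub>R axis j 1)"
    and alpha_ge: "\<alpha> \<ge> ((real CARD('m))\<^sup>2 - 1) / (real CARD('m))\<^sup>2"
    and big: "(d $ j / ffun A u d l) powr (-1/2) \<ge> tau A u"
  shows "phi A u d' l' \<le> exp (- 1 / (2 * (real CARD('m) + 1))) * phi A u d l"
proof -
  define N where "N = CARD('m)"
  define m where "m = real N"
  define F where "F = ffun A u d l"
  define F' where "F' = ffun A u d' l'"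
  define q where "q = column j A \<bullet> (matrix_inv (Bmat A d) *v column j A)"
  define c where "c = 2 / (m - 1) * (1 / (gammaf A u d l j)\<^sup>2)"
  define x where "x i = d $ i / F" for i
  define x' where "x' i = d' $ i / F'" for i
  define \<kappa> where "\<kappa> = m / (m + 1) * tau A u"
  define p where "p = sqrt (m\<^sup>2 / (m\<^sup>2 - 1))"
  define t where "t = m / (m + 1)"
  have N2: "N \<ge> 2" unfolding N_def by (rule card_ge2[OF unit_cols pos_span])
  have m2: "m \<ge> 2" using N2 m_def by simp
  have "m * m \<ge> 2 * 2" by (rule mult_mono) (use m2 in auto)
  then have mm: "m\<^sup>2 - 1 > 0" by (simp add: power2_eq_square)
  have Fp: "F > 0" "F' > 0" using f_pos f'_pos F_def F'_def by auto
  have xpos: "x i > 0" "x' i > 0" for i using Fp d_pos d'_pos by (auto simp: x_def x'_def)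
  have nzj: "column j A \<noteq> 0" using unit_cols by (metis norm_zero zero_neq_one)
  have lev: "0 < q" "d $ j * q \<le> 1" using leverage[OF pos_span d_pos nzj] q_def by auto
  have gam: "(gammaf A u d l j)\<^sup>2 = F * q"
    unfolding gammaf_def F_def[symmetric] q_def[symmetric] using Fp lev by simp
  have c_eq: "c = 2 / ((m - 1) * (F * q))" unfolding c_def gam by simp
  have c_ge: "c \<ge> 2 * x j / (m - 1)"
  proof -
    have "x j = d $ j / F" by (simp add: x_def)
    also have "\<dots> \<le> 1 / (F * q)" using lev Fp by (simp add: field_simps)
    finally have "x j \<le> 1 / (F * q)" .
    then have "2 * x j \<le> 2 * (1 / (F * q))" by simp
    then have "2 * x j / (m - 1) \<le> 2 * (1 / (F * q)) / (m - 1)"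
      by (rule divide_right_mono) (use m2 in simp)
    then show ?thesis using c_eq by (simp add: ac_simps)
  qed
  have comp: "x' i = \<alpha> * (x i + (if i = j then c else 0))" for i
  proof -
    have "((1 / F') *\<^sub>R d') $ i = (\<alpha> *\<^sub>R ((1 / F) *\<^sub>R d + c *\<^sub>R axis j 1)) $ i"
      using upd unfolding F_def F'_def c_def m_def N_def by simp
    then show ?thesis by (auto simp: x_def x'_def axis_def)
  qed
  define \<alpha>0 where "\<alpha>0 = (m\<^sup>2 - 1) / m\<^sup>2"
  have a0: "\<alpha> \<ge> \<alpha>0" using alpha_ge unfolding \<alpha>0_def m_def N_def .
  have a0pos: "\<alpha>0 > 0" using mm m2 by (simp add: \<alpha>0_def)
  have apos: "\<alpha> > 0" using a0 a0pos by simp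
  have p_eq: "p = 1 / sqrt \<alpha>0" using mm m2 by (simp add: p_def \<alpha>0_def real_sqrt_divide)
  have p1: "p \<ge> 1" using mm m2 by (simp add: p_def)
  have tau0: "tau A u \<ge> 0" by (simp add: tau_def)
  have kap0: "\<kappa> \<ge> 0" using tau0 m2 by (simp add: \<kappa>_def)
  have phi_d: "phi A u d l = (\<Prod>i\<in>UNIV. max (1 / sqrt (x i)) \<kappa>)"
    unfolding phi_def \<kappa>_def m_def N_def
    by (rule prod.cong) (use xpos in \<open>auto simp: powr_half powr_half' x_def F_def\<close>)
  have phi_d': "phi A u d' l' = (\<Prod>i\<in>UNIV. max (1 / sqrt (x' i)) \<kappa>)"
    unfolding phi_def \<kappa>_def m_def N_def
    by (rule prod.cong) (use xpos in \<open>auto simp: powr_half powr_half' x'_def F'_def\<close>)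
  have bigj: "1 / sqrt (x j) \<ge> tau A u" using big xpos powr_half powr_half' by (simp add: x_def F_def)
  define g where "g i = (if i = j then t else p)" for i
  have fac: "max (1 / sqrt (x' i)) \<kappa> \<le> g i * max (1 / sqrt (x i)) \<kappa>" for i
  proof (cases "i = j")
    case True
    have "x' j = \<alpha> * (x j + c)" using comp by simp
    also have "\<dots> \<ge> \<alpha>0 * (x j + 2 * x j / (m - 1))"
      by (rule mult_mono) (use a0 c_ge a0pos xpos(1)[of j] m2 in auto)
    finally have "x' j \<ge> \<alpha>0 * (x j + 2 * x j / (m - 1))" .
    moreover have "\<alpha>0 * (x j + 2 * x j / (m - 1)) = ((m + 1) / m)\<^sup>2 * x j"
      using m2 by (simp add: \<alpha>0_def field_simps power2_eq_square)
    ultimately have xj: "x' j \<ge> ((m + 1) / m)\<^sup>2 * x j" by simp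
    have "1 / sqrt (x' j) \<le> 1 / sqrt (((m + 1) / m)\<^sup>2 * x j)"
      using xj xpos m2 by (intro divide_left_mono) (auto simp: mult_pos_pos)
    also have "\<dots> = t * (1 / sqrt (x j))"
      using m2 by (simp add: real_sqrt_mult t_def)
    finally have b1: "1 / sqrt (x' j) \<le> t * (1 / sqrt (x j))" .
    have b2: "\<kappa> \<le> t * (1 / sqrt (x j))"
      unfolding \<kappa>_def t_def by (rule mult_left_mono) (use bigj m2 in auto)
    have "max (1 / sqrt (x j)) \<kappa> = 1 / sqrt (x j)"
    proof -
      have "\<kappa> \<le> tau A u" unfolding \<kappa>_def by (rule mult_left_le_one_le) (use tau0 m2 in auto)
      then show ?thesis using bigj by simp
    qed
    then show ?thesis using True b1 b2 by (simp add: g_def)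
  next
    case False
    have "1 / sqrt (x' i) = 1 / sqrt \<alpha> * (1 / sqrt (x i))"
      using comp[of i] False by (simp add: real_sqrt_mult)
    also have "\<dots> \<le> p * (1 / sqrt (x i))"
      unfolding p_eq by (rule mult_right_mono) (use a0 a0pos xpos(1)[of i] in \<open>auto intro: divide_left_mono less_imp_le\<close>)
    finally have b1: "1 / sqrt (x' i) \<le> p * (1 / sqrt (x i))" .
    have "\<kappa> \<le> p * \<kappa>" using p1 kap0 by (simp add: mult_le_cancel_right1)
    then have "max (1 / sqrt (x' i)) \<kappa> \<le> max (p * (1 / sqrt (x i))) (p * \<kappa>)" using b1 by auto
    also have "\<dots> = p * max (1 / sqrt (x i)) \<kappa>" using p1 by (simp add: max_mult_distrib_left)
    finally show ?thesis using False by (simp add: g_def)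
  qed
  have "phi A u d' l' \<le> (\<Prod>i\<in>UNIV. g i * max (1 / sqrt (x i)) \<kappa>)"
    unfolding phi_d' by (rule prod_mono) (use fac kap0 in auto)
  also have "\<dots> = (\<Prod>i\<in>UNIV. g i) * phi A u d l" by (simp add: prod.distrib phi_d)
  also have "(\<Prod>i\<in>UNIV. g i) = t * p ^ (N - 1)"
  proof -
    have "(\<Prod>i\<in>UNIV. g i) = g j * (\<Prod>i\<in>UNIV - {j}. g i)" by (simp add: prod.remove)
    also have "(\<Prod>i\<in>UNIV - {j}. g i) = (\<Prod>i\<in>UNIV - {j}. p)" by (rule prod.cong) (auto simp: g_def)
    also have "\<dots> = p ^ (N - 1)" by (simp add: N_def card_Diff_singleton)
    finally show ?thesis by (simp add: g_def)
  qed
  also have "t * p ^ (N - 1) * phi A u d l \<le> exp (- 1 / (2 * (m + 1))) * phi A u d l"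
  proof (rule mult_right_mono)
    show "t * p ^ (N - 1) \<le> exp (- 1 / (2 * (m + 1)))"
      using scalar_bound[OF N2] unfolding p_def t_def m_def by (simp add: mult.commute)
    show "0 \<le> phi A u d l" unfolding phi_d by (rule prod_nonneg) (use kap0 in auto)
  qed
  finally show ?thesis unfolding m_def N_def .
qed

end
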